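(* Consider the hybrid system on $\mathbb{R}^n$ $$\dot x = f(x) \quad (x \notin S), \qquad x^+ = g(x) \quad (x \in S),$$ with $f,g$ smooth, $S=\{x: c(x)=0\}$ a flat switching surface with $c$ linear (affine) in $x$ and normal vector $z(x)$. Let $A(x)=\frac{\partial f}{\partial x}(x)$, $Q(x)=f(x)f(x)^T$, and let $M(x)$ be a smooth symmetric positive-definite matrix function with $W(x):=M(x)^{-1}$. Suppose: (1) there exist a scalar function $\alpha(x)\ge 0$ and a function $\beta(x)$ with $\alpha(x)f(x)-W(x)z(x)=\beta(x)c(x)$ for all $x$; (2) for some $\lambda>0$ and some scalar function $\rho(x)\ge 0$, $$W(x)A(x)^T+A(x)W(x)-\dot W(x)+2\lambda W(x)-\rho(x)Q(x)\preceq 0;$$ (3) for some scalar function $\zeta(x)\ge 0$, $$\begin{bmatrix} W(x)+\zeta(x)Q(x) & W(x)\frac{\partial g}{\partial x}(x)^T\\ \frac{\partial g}{\partial x}(x)W(x) & W(x)\end{bmatrix}\succeq 0.$$ Then the overall hybrid system is contracting with respect to the metric $M$; i.e. the continuous dynamics are transverse contracting with rate $\lambda$ with respect to $V(x,\delta_x)=\sqrt{\delta_x^TM(x)\delta_x}$, all trajectories approach $S$ orthogonally with respect to $M$ (for $x\in S$ and $\delta_x$ tangent to $S$, $f(x)^TM(x)\delta_x=0$), and the jump satisfies $\delta_x^T\left(\frac{\partial g}{\partial x}^TM\frac{\partial g}{\partial x}-M\right)\delta_x\le 0$ for all $\delta_x$ with $\delta_x^TM(x)f(x)=0$.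
   Context: $\dot W(x)$ denotes the derivative of $W$ along the flow, $\dot W(x)=\sum_{i=1}^n \frac{\partial W}{\partial x_i}(x) f_i(x)$. Transverse contraction with rate $\lambda$ of $\dot x=f(x)$ with respect to $V$ means $\frac{\partial V}{\partial x} f(x) + \frac{\partial V}{\partial \delta_x}A(x)\delta_x \le -\lambda V(x,\delta_x)$ for all $\delta_x\neq 0$ with $\delta_x^TM(x)f(x)=0$. The matrix inequalities are required pointwise in $x$ (in the region of interest). *)

theory Defs
  imports "HOL-Analysis.Analysis"
begin

definition psd :: "real^'m^'m \<Rightarrow> bool" where
  "psd P \<longleftrightarrow> transpose P = P \<and> (\<forall>v. 0 \<le> v \<bullet> (P *v v))"

definition nsd :: "real^'m^'m \<Rightarrow> bool" where
  "nsd P \<longleftrightarrow> psd (- P)"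

definition pd :: "real^'m^'m \<Rightarrow> bool" where
  "pd P \<longleftrightarrow> transpose P = P \<and> (\<forall>v. v \<noteq> 0 \<longrightarrow> 0 < v \<bullet> (P *v v))"

definition outer :: "real^'n \<Rightarrow> real^'n \<Rightarrow> real^'n^'n" where
  "outer u v = (\<chi> i j. u $ i * v $ j)"

definition block2 :: "real^'n^'n \<Rightarrow> real^'n^'n \<Rightarrow> real^'n^'n \<Rightarrow> real^'n^'n
    \<Rightarrow> real^('n + 'n)^('n + 'n)" where
  "block2 P B C D = (\<chi> i j. case (i, j) of
       (Inl i', Inl j') \<Rightarrow> P $ i' $ j'
     | (Inl i', Inr j') \<Rightarrow> B $ i' $ j'
     | (Inr i', Inl j') \<Rightarrow> C $ i' $ j'
     | (Inr i', Inr j') \<Rightarrow> D $ i' $ j')"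

text \<open>Derivative of a (matrix) function along the flow of f:
  F-dot(x) = sum_i dF/dx_i (x) f_i(x) = DF(x) (f x).\<close>
definition flow_deriv :: "(real^'n \<Rightarrow> 'b::real_normed_vector) \<Rightarrow> (real^'n \<Rightarrow> real^'n)
    \<Rightarrow> real^'n \<Rightarrow> 'b" where
  "flow_deriv F f x = frechet_derivative F (at x) (f x)"

definition transverse_contracting ::
  "(real^'n \<Rightarrow> real^'n) \<Rightarrow> (real^'n \<Rightarrow> real^'n^'n) \<Rightarrow> (real^'n \<Rightarrow> real^'n^'n)
     \<Rightarrow> (real^'n \<Rightarrow> real^'n \<Rightarrow> real) \<Rightarrow> real \<Rightarrow> bool" where
  "transverse_contracting f A M V lam \<longleftrightarrow>
     (\<forall>x dx. dx \<noteq> 0 \<and> dx \<bullet> (M x *v f x) = 0 \<longrightarrow>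
        frechet_derivative (\<lambda>y. V y dx) (at x) (f x)
        + frechet_derivative (\<lambda>d. V x d) (at dx) (A x *v dx) \<le> - lam * V x dx)"

end

theory Submission imports Defs
begin

lemma pd_inv:
  fixes M :: "real^'n^'n"
  assumes "pd M"
  shows "M ** matrix_inv M = mat 1 \<and> matrix_inv M ** M = mat 1"
proof -
  have "\<forall>x. M *v x = 0 \<longrightarrow> x = 0"
  proof (intro allI impI, rule ccontr)
    fix x assume "M *v x = 0" "x \<noteq> 0"
    then show False using assms unfolding pd_def by force
  qed
  then have "invertible M" using matrix_left_invertible_ker invertible_left_inverse by blast
  then show ?thesis unfolding matrix_inv_def invertible_def by (rule someI_ex)
qed

lemma sym_swap:
  fixes M :: "real^'n^'n"
  assumes "transpose M = M"
  shows "x \<bullet> (M *v y) = (M *v x) \<bullet> y"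
  by (metis assms dot_lmul_matrix vector_transpose_matrix)

lemma inv_pair:
  fixes M W :: "real^'n^'n"
  assumes "transpose M = M" "M ** W = mat 1"
  shows "(M *v x) \<bullet> (W *v y) = x \<bullet> y"
proof -
  have "(M *v x) \<bullet> (W *v y) = ((M *v x) v* W) \<bullet> y" by (simp add: dot_lmul_matrix)
  also have "(M *v x) v* W = (transpose W ** M) *v x"
    by (metis vector_transpose_matrix transpose_transpose matrix_vector_mul_assoc)
  also have "transpose W ** M = mat 1"
    by (metis assms matrix_transpose_mul transpose_mat)
  finally show ?thesis by simp
qed

lemma outer_mult: "outer u v *v w = (v \<bullet> w) *\<^sub>R u"
  by (simp add: outer_def vec_eq_iff matrix_vector_mult_def inner_vec_def sum_distrib_left mult.commute mult.left_commute)

lemma block2_quad: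
  fixes P B C D :: "real^'n^'n"
  shows "(\<chi> i. case i of Inl j \<Rightarrow> p $ j | Inr j \<Rightarrow> q $ j) \<bullet>
     (block2 P B C D *v (\<chi> i. case i of Inl j \<Rightarrow> p $ j | Inr j \<Rightarrow> q $ j))
   = p \<bullet> (P *v p) + p \<bullet> (B *v q) + q \<bullet> (C *v p) + q \<bullet> (D *v q)"
  apply (simp add: inner_vec_def matrix_vector_mult_def block2_def)
  apply (simp add: UNIV_Plus_UNIV[symmetric] sum.Plus del: UNIV_Plus_UNIV)
  apply (simp add: sum.distrib sum_distrib_left algebra_simps)
  done

lemma madd_r: "((A::real^'n^'n) + B) ** C = A ** C + B ** C"
  by (vector matrix_matrix_mult_def sum.distrib[symmetric] field_simps)

lemma bilin_mm: "bounded_bilinear ((**) :: real^'n^'n \<Rightarrow> real^'n^'n \<Rightarrow> real^'n^'n)"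
  unfolding bilinear_conv_bounded_bilinear[symmetric] bilinear_def
  by (auto intro!: linearI simp: matrix_add_ldistrib madd_r scalar_matrix_assoc matrix_scalar_ac)

lemma transp_dot: "x \<bullet> (transpose (A::real^'n^'n) *v y) = (A *v x) \<bullet> y"
  by (metis dot_lmul_matrix inner_commute vector_transpose_matrix transpose_transpose)

lemma blin_mv: "bounded_linear (\<lambda>P::real^'n^'n. P *v v)"
  unfolding linear_conv_bounded_linear[symmetric]
  by (auto intro!: linearI simp: matrix_vector_mult_add_rdistrib scaleR_matrix_vector_assoc)

lemma blin_mv2: "bounded_linear (\<lambda>v. (P::real^'n^'n) *v v)"
  using matrix_vector_mul_linear linear_conv_bounded_linear by blast

lemma neg_mm: "(- (A::real^'n^'n)) ** B = - (A ** B)"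
  by (vector matrix_matrix_mult_def sum_negf)

lemma neg_mv: "(- (A::real^'n^'n)) *v v = - (A *v v)"
  by (vector matrix_vector_mult_def sum_negf)

lemma neg_mv2: "(A::real^'n^'n) *v (- v) = - (A *v v)"
  by (vector matrix_vector_mult_def sum_negf)

theorem theorem4:
  fixes f g :: "real^'n \<Rightarrow> real^'n"
    and A Dg :: "real^'n \<Rightarrow> real^'n^'n"
    and M W :: "real^'n \<Rightarrow> real^'n^'n"
    and c :: "real^'n \<Rightarrow> real" and a :: "real^'n" and b :: real
    and z :: "real^'n \<Rightarrow> real^'n"
    and \<alpha> \<rho> \<zeta> :: "real^'n \<Rightarrow> real"
    and \<beta> :: "real^'n \<Rightarrow> real^'n" and lam :: real
  assumes f_deriv: "\<And>x. (f has_derivative (\<lambda>h. A x *v h)) (at x)"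
    and g_deriv: "\<And>x. (g has_derivative (\<lambda>h. Dg x *v h)) (at x)"
    and c_affine: "\<And>x. c x = a \<bullet> x + b" and a_nz: "a \<noteq> 0"
    and z_normal: "\<And>x. z x \<noteq> 0 \<and> (\<exists>k::real. z x = k *\<^sub>R a)"
    and M_pd: "\<And>x. pd (M x)"
    and M_diff: "\<And>x. M differentiable (at x)"
    and W_def: "\<And>x. W x = matrix_inv (M x)"
    and W_diff: "\<And>x. W differentiable (at x)"
    and h1: "\<And>x. \<alpha> x \<ge> 0 \<and> \<alpha> x *\<^sub>R f x - W x *v z x = c x *\<^sub>R \<beta> x"
    and lam_pos: "lam > 0"
    and h2: "\<And>x. \<rho> x \<ge> 0 \<and>
       nsd (W x ** transpose (A x) + A x ** W x - flow_deriv W f x + (2 * lam) *\<^sub>R W x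
            - \<rho> x *\<^sub>R outer (f x) (f x))"
    and h3: "\<And>x. \<zeta> x \<ge> 0 \<and>
       psd (block2 (W x + \<zeta> x *\<^sub>R outer (f x) (f x)) (W x ** transpose (Dg x))
                   (Dg x ** W x) (W x))"
  shows "transverse_contracting f A M (\<lambda>x dx. sqrt (dx \<bullet> (M x *v dx))) lam
       \<and> (\<forall>x dx. c x = 0 \<and> a \<bullet> dx = 0 \<longrightarrow> f x \<bullet> (M x *v dx) = 0)
       \<and> (\<forall>x dx. dx \<bullet> (M x *v f x) = 0 \<longrightarrow>
            dx \<bullet> ((transpose (Dg x) ** M x ** Dg x - M x) *v dx) \<le> 0)"
proof -
  have Msym: "\<And>x. transpose (M x) = M x" using M_pd unfolding pd_def by blast
  have MW: "\<And>x. M x ** W x = mat 1" and WM: "\<And>x. W x ** M x = mat 1"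
    using pd_inv[OF M_pd] W_def by auto
  have P1: "transverse_contracting f A M (\<lambda>x dx. sqrt (dx \<bullet> (M x *v dx))) lam"
    unfolding transverse_contracting_def
  proof (intro allI impI)
    fix x dx :: "real^'n"
    assume asm: "dx \<noteq> 0 \<and> dx \<bullet> (M x *v f x) = 0"
    define s where "s = dx \<bullet> (M x *v dx)"
    have spos: "s > 0" using asm M_pd unfolding pd_def s_def by blast
    define M' where "M' = frechet_derivative M (at x)"
    define W' where "W' = frechet_derivative W (at x)"
    have dM: "(M has_derivative M') (at x)" unfolding M'_def using M_diff frechet_derivative_works by blast
    have dW: "(W has_derivative W') (at x)" unfolding W'_def using W_diff frechet_derivative_works by blast
    have dV1: "((\<lambda>y. sqrt (dx \<bullet> (M y *v dx))) has_derivative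
        (\<lambda>h. (dx \<bullet> (M' h *v dx)) * (inverse (sqrt s) / 2))) (at x)"
    proof -
      have "((\<lambda>y. dx \<bullet> (M y *v dx)) has_derivative (\<lambda>h. dx \<bullet> (M' h *v dx))) (at x)"
        using bounded_linear.has_derivative[OF bounded_linear_compose[OF bounded_linear_inner_right blin_mv] dM]
        by simp
      from has_derivative_real_sqrt[OF _ this] spos show ?thesis unfolding s_def by simp
    qed
    have dV2: "((\<lambda>d. sqrt (d \<bullet> (M x *v d))) has_derivative
        (\<lambda>h. (dx \<bullet> (M x *v h) + h \<bullet> (M x *v dx)) * (inverse (sqrt s) / 2))) (at dx)"
    proof -
      have "((\<lambda>d. d \<bullet> (M x *v d)) has_derivative (\<lambda>h. dx \<bullet> (M x *v h) + h \<bullet> (M x *v dx))) (at dx)"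
        using has_derivative_inner[OF has_derivative_id bounded_linear.has_derivative[OF blin_mv2 has_derivative_id], of "M x" dx UNIV]
        by (simp only: id_apply)
      from has_derivative_real_sqrt[OF _ this] spos show ?thesis unfolding s_def by simp
    qed
    have e1: "frechet_derivative (\<lambda>y. sqrt (dx \<bullet> (M y *v dx))) (at x) (f x)
        = (dx \<bullet> (M' (f x) *v dx)) * (inverse (sqrt s) / 2)"
      using fun_cong[OF frechet_derivative_at[OF dV1], of "f x", symmetric] by (simp only:)
    have e2: "frechet_derivative (\<lambda>d. sqrt (d \<bullet> (M x *v d))) (at dx) (A x *v dx)
        = (dx \<bullet> (M x *v (A x *v dx)) + (A x *v dx) \<bullet> (M x *v dx)) * (inverse (sqrt s) / 2)"
      using fun_cong[OF frechet_derivative_at[OF dV2], of "A x *v dx", symmetric] by (simp only:)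
    show "frechet_derivative (\<lambda>y. sqrt (dx \<bullet> (M y *v dx))) (at x) (f x)
        + frechet_derivative (\<lambda>d. sqrt (d \<bullet> (M x *v d))) (at dx) (A x *v dx)
        \<le> - lam * sqrt (dx \<bullet> (M x *v dx))"
    proof -
      have hW: "W' h = - (W x ** M' h ** W x)" for h
      proof -
        have d1: "((\<lambda>y. W y ** M y) has_derivative (\<lambda>h. W x ** M' h + W' h ** M x)) (at x)"
          by (rule bounded_bilinear.FDERIV[OF bilin_mm dW dM])
        have "(\<lambda>y. W y ** M y) = (\<lambda>y. mat 1)" using WM by auto
        then have d2: "((\<lambda>y. W y ** M y) has_derivative (\<lambda>h. 0)) (at x)" by simp
        have eq: "(\<lambda>h. W x ** M' h + W' h ** M x) = (\<lambda>h. 0)" using has_derivative_unique[OF d1 d2] .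
        have "W' h ** M x = - (W x ** M' h)" using fun_cong[OF eq, of h]
          by (metis add.commute add_eq_0_iff2 minus_equation_iff)
        then have "W' h ** M x ** W x = (- (W x ** M' h)) ** W x" by simp
        then show ?thesis by (metis matrix_mul_assoc MW matrix_mul_rid neg_mm)
      qed
      define u where "u = M x *v dx"
      define D where "D = dx \<bullet> (M' (f x) *v dx)"
      define T where "T = u \<bullet> (A x *v dx)"
      have Wu: "W x *v u = dx" unfolding u_def by (simp add: matrix_vector_mul_assoc WM)
      have t1: "u \<bullet> (W x *v (transpose (A x) *v u)) = T"
        unfolding T_def using inv_pair[OF Msym MW] transp_dot u_def by (metis inner_commute)
      have t1': "u \<bullet> (W x *v (u v* A x)) = T"
        using t1 by (metis vector_transpose_matrix transpose_transpose)
      have t2: "u \<bullet> (A x *v (W x *v u)) = T" unfolding T_def Wu ..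
      have t3: "u \<bullet> (W' (f x) *v u) = - D"
      proof -
        have "W' (f x) *v u = - (W x *v (M' (f x) *v dx))"
          by (simp add: hW neg_mv matrix_vector_mul_assoc[symmetric] Wu)
        then show ?thesis unfolding D_def using inv_pair[OF Msym MW] u_def by simp
      qed
      have t4: "u \<bullet> (W x *v u) = s" using inv_pair[OF Msym MW] unfolding u_def s_def by simp
      have fu: "f x \<bullet> u = 0" unfolding u_def using asm sym_swap[OF Msym] by (metis inner_commute)
      have t5: "u \<bullet> (outer (f x) (f x) *v u) = 0" using fu by (simp add: outer_mult inner_commute)
      define N where "N = W x ** transpose (A x) + A x ** W x - flow_deriv W f x + (2 * lam) *\<^sub>R W x
            - \<rho> x *\<^sub>R outer (f x) (f x)"
      have "0 \<le> u \<bullet> ((- N) *v u)" using h2[of x] unfolding N_def nsd_def psd_def by blast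
      then have "u \<bullet> (N *v u) \<le> 0" by (simp add: neg_mv)
      moreover have "u \<bullet> (N *v u) = 2 * T + D + 2 * lam * s"
        unfolding N_def flow_deriv_def W'_def[symmetric]
        by (simp add: matrix_vector_mult_add_rdistrib matrix_vector_mult_diff_rdistrib
            scaleR_matrix_vector_assoc[symmetric] matrix_vector_mul_assoc[symmetric]
            inner_diff_right inner_add_right t1' t2 t3 t4 t5 del: scaleR_matrix_vector_assoc)
      ultimately have key: "D + 2 * T \<le> - 2 * lam * s" by linarith
      define r where "r = sqrt s"
      have rpos: "r > 0" using spos r_def by simp
      have rr: "r * r = s" using spos r_def by simp
      have e2': "dx \<bullet> (M x *v (A x *v dx)) + (A x *v dx) \<bullet> (M x *v dx) = 2 * T"
        unfolding T_def u_def using sym_swap[OF Msym] by (metis inner_commute mult_2)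
      have "(D + 2 * T) * (inverse r / 2) \<le> (- 2 * lam * s) * (inverse r / 2)"
        using key rpos by (intro mult_right_mono) auto
      also have "(- 2 * lam * s) * (inverse r / 2) = - lam * r" using rpos rr[symmetric]
        by (simp add: field_simps)
      finally show ?thesis unfolding e1 e2 e2' r_def s_def[symmetric] D_def
        by (simp add: distrib_right)
    qed
  qed
  have P2: "\<forall>x dx. c x = 0 \<and> a \<bullet> dx = 0 \<longrightarrow> f x \<bullet> (M x *v dx) = 0"
  proof (intro allI impI)
    fix x dx assume H: "c x = 0 \<and> a \<bullet> dx = 0"
    obtain k where zk: "z x = k *\<^sub>R a" using z_normal by blast
    have zn: "z x \<noteq> 0" using z_normal by blast
    have eq: "\<alpha> x *\<^sub>R f x = W x *v z x" using h1[of x] H by simp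
    have Mz: "M x *v (W x *v z x) = z x" by (simp add: matrix_vector_mul_assoc MW)
    have an: "\<alpha> x \<noteq> 0"
    proof
      assume "\<alpha> x = 0"
      then have "W x *v z x = 0" using eq by simp
      then show False using zn Mz by simp
    qed
    have fx: "f x = (1 / \<alpha> x) *\<^sub>R (W x *v z x)" using eq an
      by (metis eq_vector_fraction_iff scaleR_scaleR divide_inverse_commute mult_1 scaleR_one) 
    have "f x \<bullet> (M x *v dx) = (M x *v f x) \<bullet> dx" using sym_swap[OF Msym] .
    also have "M x *v f x = (1 / \<alpha> x) *\<^sub>R z x" unfolding fx by (simp add: matrix_vector_mult_scaleR Mz)
    finally show "f x \<bullet> (M x *v dx) = 0" using H zk by simp
  qed
  have P3: "\<forall>x dx. dx \<bullet> (M x *v f x) = 0 \<longrightarrow>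
            dx \<bullet> ((transpose (Dg x) ** M x ** Dg x - M x) *v dx) \<le> 0"
  proof (intro allI impI)
    fix x dx assume H: "dx \<bullet> (M x *v f x) = 0"
    define y where "y = Dg x *v dx"
    define p where "p = M x *v dx"
    define q where "q = - (M x *v y)"
    define s where "s = dx \<bullet> (M x *v dx)"
    define R where "R = y \<bullet> (M x *v y)"
    define v :: "real^('n+'n)" where "v = (\<chi> i. case i of Inl j \<Rightarrow> p $ j | Inr j \<Rightarrow> q $ j)"
    have "0 \<le> v \<bullet> (block2 (W x + \<zeta> x *\<^sub>R outer (f x) (f x)) (W x ** transpose (Dg x))
                   (Dg x ** W x) (W x) *v v)" using h3[of x] unfolding psd_def by blast
    then have ge: "0 \<le> p \<bullet> ((W x + \<zeta> x *\<^sub>R outer (f x) (f x)) *v p) + p \<bullet> ((W x ** transpose (Dg x)) *v q)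
        + q \<bullet> ((Dg x ** W x) *v p) + q \<bullet> (W x *v q)" unfolding v_def block2_quad .
    have Wp: "W x *v p = dx" unfolding p_def by (simp add: matrix_vector_mul_assoc WM)
    have fp: "f x \<bullet> p = 0" unfolding p_def using H sym_swap[OF Msym] by (metis inner_commute)
    have b1: "p \<bullet> ((W x + \<zeta> x *\<^sub>R outer (f x) (f x)) *v p) = s"
    proof -
      have "p \<bullet> (W x *v p) = s" using inv_pair[OF Msym MW] unfolding p_def s_def by simp
      moreover have "p \<bullet> ((\<zeta> x *\<^sub>R outer (f x) (f x)) *v p) = 0"
        using fp by (simp add: scaleR_matrix_vector_assoc[symmetric] outer_mult inner_commute)
      ultimately show ?thesis by (simp add: matrix_vector_mult_add_rdistrib inner_add_right)
    qed
    have b2: "p \<bullet> ((W x ** transpose (Dg x)) *v q) = - R"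
    proof -
      have "p \<bullet> ((W x ** transpose (Dg x)) *v q) = dx \<bullet> (transpose (Dg x) *v q)"
        unfolding p_def matrix_vector_mul_assoc[symmetric] by (rule inv_pair[OF Msym MW])
      also have "\<dots> = y \<bullet> q" unfolding y_def by (rule transp_dot)
      finally show ?thesis unfolding q_def R_def by simp
    qed
    have b3: "q \<bullet> ((Dg x ** W x) *v p) = - R"
      unfolding matrix_vector_mul_assoc[symmetric] Wp q_def R_def y_def by (simp add: inner_commute)
    have b4: "q \<bullet> (W x *v q) = R"
      unfolding q_def R_def using inv_pair[OF Msym[of x] MW[of x], of y "M x *v y"] by (simp add: neg_mv2)
    have "dx \<bullet> ((transpose (Dg x) ** M x ** Dg x - M x) *v dx) = R - s"
      unfolding R_def s_def y_def
      apply (simp add: matrix_vector_mult_diff_rdistrib inner_diff_right matrix_vector_mul_assoc[symmetric] transp_dot)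
      by (metis dot_lmul_matrix inner_commute)
    then show "dx \<bullet> ((transpose (Dg x) ** M x ** Dg x - M x) *v dx) \<le> 0"
      using ge b1 b2 b3 b4 by linarith
  qed
  show ?thesis using P1 P2 P3 by blast
qed

end
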